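(* Let $(x^k,\lambda^k)_{k\ge0}$ be generated by the proximal ADMM applied to (P). Suppose Assumption (A2) holds on a compact set $S$ with constants $M_f,L_f,C_\varphi,M_\varphi,L_\varphi$, and that $x^k,x^{k+1}\in S$ for some $k\ge1$. Then for every $i=0,\dots,n-1$, $$\|\lambda_i^{k+1}-\lambda_i^k\|^2\le\sum_{j=i}^{n-1}2(n-i)C_{j,i}^2\|x_{j+1}^{k+1}-x_{j+1}^k\|^2+\sum_{j=i}^{n-1}2(n-i)\tilde C_{j,i}^2\|x_{j+1}^k-x_{j+1}^{k-1}\|^2,$$ where for $j>i$ $$C_{j,i}=\frac{M_\varphi^{j-i}-M_\varphi^{n-i-1}}{1-M_\varphi}M_fL_\varphi+M_\varphi^{j-i}L_f+(2j-2i+1)\frac{M_\varphi^{j-i}}{\eta_{j+1}}+(2j-2i-1)\rho_jM_\varphi^{j-i},\qquad \tilde C_{j,i}=\frac{M_\varphi^{j-i}}{\eta_{j+1}}+\rho_jM_\varphi^{j-i},$$ and for $j=i$ $$C_{i,i}=\frac{1-M_\varphi^{n-i-1}}{1-M_\varphi}M_fL_\varphi+L_f+\frac{1}{\eta_{i+1}},\qquad \tilde C_{i,i}=\frac{1}{\eta_{i+1}}.$$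
   Context: Let $n,d\ge1$, and let $f_0,\dots,f_n:\mathbb{R}^d\to\mathbb{R}$ and $\varphi:\mathbb{R}^d\to\mathbb{R}^d$ be continuously differentiable; $\nabla\varphi$ denotes the Jacobian matrix and $\|\cdot\|$ the Euclidean norm / induced matrix 2-norm. Problem (P): minimize $\sum_{i=0}^n f_i(x_i)$ over $x=(x_0,\dots,x_n)\in(\mathbb{R}^d)^{n+1}$ subject to $x_{j+1}=\varphi(x_j)$, $j=0,\dots,n-1$. For penalty parameters $\rho_0,\dots,\rho_{n-1}>0$ and $\lambda=(\lambda_0,\dots,\lambda_{n-1})\in(\mathbb{R}^d)^n$, the augmented Lagrangian is $L_\rho(x,\lambda)=\sum_{i=0}^n f_i(x_i)+\sum_{i=0}^{n-1}\big(\langle\lambda_i,x_{i+1}-\varphi(x_i)\rangle+\frac{\rho_i}{2}\|x_{i+1}-\varphi(x_i)\|^2\big)$. Proximal ADMM: given $\eta_0,\dots,\eta_n>0$ and an initial point $(x^0,\lambda^0)$, for $k=0,1,\dots$, for $i=0,1,\dots,n$ in this order, $x_i^{k+1}$ is a (global) minimizer over $x_i$ of $L_\rho(x_0^{k+1},\dots,x_{i-1}^{k+1},x_i,x_{i+1}^k,\dots,x_n^k,\lambda^k)+\frac{1}{2\eta_i}\|x_i-x_i^k\|^2$ (assumed to exist), then $\lambda_j^{k+1}=\lambda_j^k+\rho_j(x_{j+1}^{k+1}-\varphi(x_j^{k+1}))$, $j=0,\dots,n-1$. Assumption (A2) on a compact set $S\subset(\mathbb{R}^d)^{n+1}$: there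 are constants $M_f,L_f,C_\varphi,M_\varphi,L_\varphi>0$ such that for all $x=(x_0,\dots,x_n),y=(y_0,\dots,y_n)\in S$ and all $i=0,\dots,n$: $\|\nabla f_i(x_i)\|\le M_f$, $\|\nabla f_i(x_i)-\nabla f_i(y_i)\|\le L_f\|x_i-y_i\|$, $\|\varphi(x_i)\|\le C_\varphi$, $\|\nabla\varphi(x_i)\|\le M_\varphi$, $\|\nabla\varphi(x_i)-\nabla\varphi(y_i)\|\le L_\varphi\|x_i-y_i\|$. Quotients of the form $\frac{M_\varphi^a-M_\varphi^b}{1-M_\varphi}$ ($a\le b$) denote $\sum_{l=a}^{b-1}M_\varphi^l$ (in particular when $M_\varphi=1$). *)

theory Defs
  imports "HOL-Analysis.Analysis"
begin

text \<open>Points of (R^d)^(n+1) are represented as functions nat => 'a (only indices 0..n matter);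
  'a is a Euclidean space of dimension d >= 1.\<close>

definition aug_lagr ::
  "(nat \<Rightarrow> 'a::euclidean_space \<Rightarrow> real) \<Rightarrow> ('a \<Rightarrow> 'a) \<Rightarrow> (nat \<Rightarrow> real) \<Rightarrow> nat
   \<Rightarrow> (nat \<Rightarrow> 'a) \<Rightarrow> (nat \<Rightarrow> 'a) \<Rightarrow> real" where
  "aug_lagr f phi rho n x lam =
     (\<Sum>i\<le>n. f i (x i)) +
     (\<Sum>i<n. inner (lam i) (x (Suc i) - phi (x i)) + rho i / 2 * (norm (x (Suc i) - phi (x i)))\<^sup>2)"

text \<open>Proximal ADMM: x k i is x_i^k, lam k i is lambda_i^k.\<close>
definition prox_admm ::
  "(nat \<Rightarrow> 'a::euclidean_space \<Rightarrow> real) \<Rightarrow> ('a \<Rightarrow> 'a) \<Rightarrow> (nat \<Rightarrow> real) \<Rightarrow> (nat \<Rightarrow> real) \<Rightarrow> nat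
   \<Rightarrow> (nat \<Rightarrow> nat \<Rightarrow> 'a) \<Rightarrow> (nat \<Rightarrow> nat \<Rightarrow> 'a) \<Rightarrow> bool" where
  "prox_admm f phi rho eta n x lam \<longleftrightarrow>
     (\<forall>k. \<forall>i\<le>n. \<forall>z.
        aug_lagr f phi rho n (\<lambda>j. if j < i then x (Suc k) j else if j = i then x (Suc k) i else x k j) (lam k)
          + 1 / (2 * eta i) * (norm (x (Suc k) i - x k i))\<^sup>2
        \<le> aug_lagr f phi rho n (\<lambda>j. if j < i then x (Suc k) j else if j = i then z else x k j) (lam k)
          + 1 / (2 * eta i) * (norm (z - x k i))\<^sup>2) \<and>
     (\<forall>k. \<forall>j<n. lam (Suc k) j = lam k j + rho j *\<^sub>R (x (Suc k) (Suc j) - phi (x (Suc k) j)))"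

text \<open>Assumption (A2) on a set S of points (restricted to indices 0..n).
  Df i x is the gradient of f i at x, Dphi x the Jacobian of phi at x (norm = operator 2-norm).\<close>
definition assumption_A2 ::
  "nat \<Rightarrow> (nat \<Rightarrow> 'a::euclidean_space \<Rightarrow> 'a) \<Rightarrow> ('a \<Rightarrow> 'a) \<Rightarrow> ('a \<Rightarrow> 'a \<Rightarrow>\<^sub>L 'a)
   \<Rightarrow> (nat \<Rightarrow> 'a) set \<Rightarrow> real \<Rightarrow> real \<Rightarrow> real \<Rightarrow> real \<Rightarrow> real \<Rightarrow> bool" where
  "assumption_A2 n Df phi Dphi S Mf Lf Cphi Mphi Lphi \<longleftrightarrow>
     Mf > 0 \<and> Lf > 0 \<and> Cphi > 0 \<and> Mphi > 0 \<and> Lphi > 0 \<and>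
     (\<forall>x\<in>S. \<forall>y\<in>S. \<forall>i\<le>n.
        norm (Df i (x i)) \<le> Mf \<and>
        norm (Df i (x i) - Df i (y i)) \<le> Lf * norm (x i - y i) \<and>
        norm (phi (x i)) \<le> Cphi \<and>
        norm (Dphi (x i)) \<le> Mphi \<and>
        norm (Dphi (x i) - Dphi (y i)) \<le> Lphi * norm (x i - y i))"

text \<open>(M^a - M^b)/(1 - M) read as sum_{l=a}^{b-1} M^l.\<close>
definition geo_quot :: "real \<Rightarrow> nat \<Rightarrow> nat \<Rightarrow> real" where
  "geo_quot M a b = (\<Sum>l=a..<b. M ^ l)"

definition C_const ::
  "nat \<Rightarrow> real \<Rightarrow> real \<Rightarrow> real \<Rightarrow> real \<Rightarrow> (nat \<Rightarrow> real) \<Rightarrow> (nat \<Rightarrow> real) \<Rightarrow> nat \<Rightarrow> nat \<Rightarrow> real" where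
  "C_const n Mf Lf Mphi Lphi rho eta j i =
     (if j = i then geo_quot Mphi 0 (n - i - 1) * Mf * Lphi + Lf + 1 / eta (Suc i)
      else geo_quot Mphi (j - i) (n - i - 1) * Mf * Lphi + Mphi ^ (j - i) * Lf
        + (2 * real j - 2 * real i + 1) * Mphi ^ (j - i) / eta (Suc j)
        + (2 * real j - 2 * real i - 1) * rho j * Mphi ^ (j - i))"

definition Ct_const ::
  "real \<Rightarrow> (nat \<Rightarrow> real) \<Rightarrow> (nat \<Rightarrow> real) \<Rightarrow> nat \<Rightarrow> nat \<Rightarrow> real" where
  "Ct_const Mphi rho eta j i =
     (if j = i then 1 / eta (Suc i)
      else Mphi ^ (j - i) / eta (Suc j) + rho j * Mphi ^ (j - i))"

end

theory Submission
  imports Defs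
begin

lemma foc:
  fixes f :: "nat \<Rightarrow> 'a::euclidean_space \<Rightarrow> real" and Df :: "nat \<Rightarrow> 'a \<Rightarrow> 'a"
    and phi :: "'a \<Rightarrow> 'a" and Dphi :: "'a \<Rightarrow> 'a \<Rightarrow>\<^sub>L 'a"
    and rho eta :: "nat \<Rightarrow> real" and x lam :: "nat \<Rightarrow> nat \<Rightarrow> 'a"
  assumes admm: "prox_admm f phi rho eta n x lam"
    and f_C1: "\<And>i y. i \<le> n \<Longrightarrow> (f i has_derivative (\<lambda>h. inner (Df i y) h)) (at y)"
    and phi_C1: "\<And>y. (phi has_derivative blinfun_apply (Dphi y)) (at y)"
    and i1: "1 \<le> i" and i2: "i \<le> n" and eta_nz: "eta i \<noteq> 0"
  shows "inner (Df i (x (Suc m) i)) h + inner (lam m (i-1)) h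
      + rho (i-1) * inner (x (Suc m) i - phi (x (Suc m) (i-1))) h
      + (if i < n then - inner (lam m i) (Dphi (x (Suc m) i) h)
           - rho i * inner (x m (Suc i) - phi (x (Suc m) i)) (Dphi (x (Suc m) i) h) else 0)
      + inner (x (Suc m) i - x m i) h / eta i = 0"
proof -
  define z0 where "z0 = x (Suc m) i"
  define xz where "xz z = (\<lambda>j. if j < i then x (Suc m) j else if j = i then z else x m j)" for z
  define c where "c j z = inner (lam m j) (xz z (Suc j) - phi (xz z j))
      + rho j / 2 * (norm (xz z (Suc j) - phi (xz z j)))\<^sup>2" for j z
  define F where "F z = aug_lagr f phi rho n (xz z) (lam m) + 1 / (2 * eta i) * (norm (z - x m i))\<^sup>2" for z
  have Feq: "F = (\<lambda>z. (\<Sum>j\<le>n. f j (xz z j)) + (\<Sum>j<n. c j z) + 1 / (2 * eta i) * inner (z - x m i) (z - x m i))"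
    unfolding F_def c_def aug_lagr_def by (simp add: power2_norm_eq_inner)
  have min: "\<forall>z\<in>UNIV. F z0 \<le> F z"
  proof
    fix z
    have "xz z0 = (\<lambda>j. if j < i then x (Suc m) j else if j = i then x (Suc m) i else x m j)"
      unfolding xz_def z0_def by simp
    then show "F z0 \<le> F z" using admm i2 unfolding prox_admm_def F_def xz_def z0_def by auto
  qed
  have d1: "((\<lambda>z. f j (xz z j)) has_derivative (\<lambda>h. if j = i then inner (Df i z0) h else 0)) (at z0)"
    if "j \<le> n" for j
  proof (cases "j = i")
    case True
    then have "(\<lambda>z. f j (xz z j)) = f i" by (auto simp: xz_def)
    then show ?thesis using True f_C1[OF i2, of z0] by simp
  next
    case False
    then have "(\<lambda>z. f j (xz z j)) = (\<lambda>z. f j (if j < i then x (Suc m) j else x m j))"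
      by (auto simp: xz_def)
    then show ?thesis using False by simp
  qed
  define D where "D = blinfun_apply (Dphi z0)"
  have d2: "((\<lambda>z. c j z) has_derivative (\<lambda>h. if j = i then - inner (lam m i) (D h)
           - rho i * inner (x m (Suc i) - phi z0) (D h)
       else if Suc j = i then inner (lam m j) h + rho j * inner (z0 - phi (x (Suc m) j)) h else 0)) (at z0)"
    if "j < n" for j
  proof -
    consider "j = i" | "Suc j = i" | "j \<noteq> i" "Suc j \<noteq> i" by blast
    then show ?thesis
    proof cases
      case 1
      then have e: "(\<lambda>z. c j z) = (\<lambda>z. inner (lam m i) (x m (Suc i) - phi z)
          + rho i / 2 * inner (x m (Suc i) - phi z) (x m (Suc i) - phi z))"
        by (auto simp: c_def xz_def power2_norm_eq_inner)
      show ?thesis unfolding e using 1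
        by (auto intro!: derivative_eq_intros phi_C1 simp: D_def algebra_simps inner_commute)
    next
      case 2
      then have e: "(\<lambda>z. c j z) = (\<lambda>z. inner (lam m j) (z - phi (x (Suc m) j))
          + rho j / 2 * inner (z - phi (x (Suc m) j)) (z - phi (x (Suc m) j)))"
        by (auto simp: c_def xz_def power2_norm_eq_inner)
      show ?thesis unfolding e using 2
        by (auto intro!: derivative_eq_intros simp: algebra_simps inner_commute)
    next
      case 3
      then have e: "(\<lambda>z. c j z) = (\<lambda>z. c j z0)"
        by (auto simp: c_def xz_def)
      show ?thesis using 3 by (subst e) simp
    qed
  qed
  have dF: "(F has_derivative (\<lambda>h. (\<Sum>j\<le>n. if j = i then inner (Df i z0) h else 0)
      + (\<Sum>j<n. if j = i then - inner (lam m i) (D h)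
           - rho i * inner (x m (Suc i) - phi z0) (D h)
       else if Suc j = i then inner (lam m j) h + rho j * inner (z0 - phi (x (Suc m) j)) h else 0)
      + 1 / (2 * eta i) * (2 * inner (z0 - x m i) h))) (at z0)"
    unfolding Feq
    by (auto intro!: derivative_eq_intros has_derivative_sum d1 d2 simp: algebra_simps inner_commute eta_nz)
  have "(\<lambda>h. (\<Sum>j\<le>n. if j = i then inner (Df i z0) h else 0)
      + (\<Sum>j<n. if j = i then - inner (lam m i) (D h)
           - rho i * inner (x m (Suc i) - phi z0) (D h)
       else if Suc j = i then inner (lam m j) h + rho j * inner (z0 - phi (x (Suc m) j)) h else 0)
      + 1 / (2 * eta i) * (2 * inner (z0 - x m i) h)) = (\<lambda>h. 0)"
    by (rule differential_zero_maxmin[where S=UNIV, OF _ _ dF]) (use min in auto)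
  then have z: "(\<Sum>j\<le>n. if j = i then inner (Df i z0) h else 0)
      + (\<Sum>j<n. if j = i then - inner (lam m i) (D h)
           - rho i * inner (x m (Suc i) - phi z0) (D h)
       else if Suc j = i then inner (lam m j) h + rho j * inner (z0 - phi (x (Suc m) j)) h else 0)
      + 1 / (2 * eta i) * (2 * inner (z0 - x m i) h) = 0" by metis
  have s1: "(\<Sum>j\<le>n. if j = i then inner (Df i z0) h else 0) = inner (Df i z0) h"
    using i2 by simp
  have s2: "(\<Sum>j<n. if j = i then - inner (lam m i) (D h)
           - rho i * inner (x m (Suc i) - phi z0) (D h)
       else if Suc j = i then inner (lam m j) h + rho j * inner (z0 - phi (x (Suc m) j)) h else 0)
     = (\<Sum>j<n. (if j = i then - inner (lam m i) (D h)
           - rho i * inner (x m (Suc i) - phi z0) (D h) else 0)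
       + (if j = i - 1 then inner (lam m (i-1)) h + rho (i-1) * inner (z0 - phi (x (Suc m) (i-1))) h else 0))"
    using i1 by (intro sum.cong) auto
  also have "\<dots> = (if i < n then - inner (lam m i) (D h)
           - rho i * inner (x m (Suc i) - phi z0) (D h) else 0)
       + (inner (lam m (i-1)) h + rho (i-1) * inner (z0 - phi (x (Suc m) (i-1))) h)"
    using i1 i2 by (simp add: sum.distrib)
  finally show ?thesis using z s1 i1 unfolding z0_def D_def
    by (simp add: field_simps)
qed

lemma lin_blin: "linear (blinfun_apply A)"
  by (simp add: blinfun.bounded_linear_right bounded_linear.linear)

lemma rel:
  fixes f :: "nat \<Rightarrow> 'a::euclidean_space \<Rightarrow> real" and Df :: "nat \<Rightarrow> 'a \<Rightarrow> 'a"
    and phi :: "'a \<Rightarrow> 'a" and Dphi :: "'a \<Rightarrow> 'a \<Rightarrow>\<^sub>L 'a"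
    and rho eta :: "nat \<Rightarrow> real" and x lam :: "nat \<Rightarrow> nat \<Rightarrow> 'a"
  assumes admm: "prox_admm f phi rho eta n x lam"
    and f_C1: "\<And>i y. i \<le> n \<Longrightarrow> (f i has_derivative (\<lambda>h. inner (Df i y) h)) (at y)"
    and phi_C1: "\<And>y. (phi has_derivative blinfun_apply (Dphi y)) (at y)"
    and j: "j < n" and eta_nz: "eta (Suc j) \<noteq> 0"
  shows "lam (Suc m) j = - Df (Suc j) (x (Suc m) (Suc j))
     - (1 / eta (Suc j)) *\<^sub>R (x (Suc m) (Suc j) - x m (Suc j))
     + (if Suc j < n then adjoint (blinfun_apply (Dphi (x (Suc m) (Suc j))))
          (lam (Suc m) (Suc j) - rho (Suc j) *\<^sub>R (x (Suc m) (Suc (Suc j)) - x m (Suc (Suc j)))) else 0)"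
    (is "?L = ?R")
proof -
  have l1: "lam (Suc m) j = lam m j + rho j *\<^sub>R (x (Suc m) (Suc j) - phi (x (Suc m) j))"
    using admm j unfolding prox_admm_def by blast
  have l2: "lam (Suc m) (Suc j) = lam m (Suc j) + rho (Suc j) *\<^sub>R (x (Suc m) (Suc (Suc j)) - phi (x (Suc m) (Suc j)))"
    if "Suc j < n"
    using admm that unfolding prox_admm_def by blast
  have inn: "inner (?L - ?R) h = 0" for h
  proof -
    have F: "inner (Df (Suc j) (x (Suc m) (Suc j))) h + inner (lam m j) h
      + rho j * inner (x (Suc m) (Suc j) - phi (x (Suc m) j)) h
      + (if Suc j < n then - inner (lam m (Suc j)) (Dphi (x (Suc m) (Suc j)) h)
           - rho (Suc j) * inner (x m (Suc (Suc j)) - phi (x (Suc m) (Suc j))) (Dphi (x (Suc m) (Suc j)) h) else 0)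
      + inner (x (Suc m) (Suc j) - x m (Suc j)) h / eta (Suc j) = 0"
      using foc[OF admm f_C1 phi_C1, of "Suc j" m h] j eta_nz by simp
    have i1: "inner (lam (Suc m) j) h = inner (lam m j) h + rho j * inner (x (Suc m) (Suc j) - phi (x (Suc m) j)) h"
      unfolding l1 by (simp add: inner_add_left)
    have e: "inner (?L - ?R) h = inner (lam (Suc m) j) h + inner (Df (Suc j) (x (Suc m) (Suc j))) h
        + inner (x (Suc m) (Suc j) - x m (Suc j)) h / eta (Suc j)
        - (if Suc j < n then inner (adjoint (blinfun_apply (Dphi (x (Suc m) (Suc j))))
          (lam (Suc m) (Suc j) - rho (Suc j) *\<^sub>R (x (Suc m) (Suc (Suc j)) - x m (Suc (Suc j))))) h else 0)"
      by (simp add: inner_diff_left inner_add_left)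
    show ?thesis
    proof (cases "Suc j < n")
      case True
      have "inner (adjoint (blinfun_apply (Dphi (x (Suc m) (Suc j))))
          (lam (Suc m) (Suc j) - rho (Suc j) *\<^sub>R (x (Suc m) (Suc (Suc j)) - x m (Suc (Suc j))))) h
        = inner (lam m (Suc j)) (Dphi (x (Suc m) (Suc j)) h)
           + rho (Suc j) * inner (x m (Suc (Suc j)) - phi (x (Suc m) (Suc j))) (Dphi (x (Suc m) (Suc j)) h)"
        unfolding adjoint_clauses(2)[OF lin_blin] l2[OF True]
        by (simp add: algebra_simps inner_diff_left inner_add_left)
      then show ?thesis using F True unfolding e i1
        by simp
    next
      case False
      then show ?thesis using F unfolding e i1
        by simp
    qed
  qed
  have "inner (?L - ?R) (?L - ?R) = 0" by (rule inn)
  then show ?thesis by simp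
qed

lemma norm_le_from_sq:
  fixes w :: "'a::real_inner"
  assumes "inner w w \<le> c * norm w" and "c \<ge> 0"
  shows "norm w \<le> c"
proof (cases "norm w = 0")
  case True
  have "0 \<le> inner w w" by simp
  then have "0 \<le> c * norm w" using assms by linarith
  then show ?thesis using True assms by simp
next
  case False
  then have "norm w * norm w \<le> c * norm w" using assms by (simp add: power2_norm_eq_inner[symmetric] power2_eq_square)
  then show ?thesis using False by (simp add: mult_le_cancel_right)
qed

lemma adj_norm:
  fixes A :: "'a::euclidean_space \<Rightarrow>\<^sub>L 'a"
  shows "norm (adjoint (blinfun_apply A) v) \<le> norm A * norm v"
proof (rule norm_le_from_sq)
  let ?w = "adjoint (blinfun_apply A) v"
  have "inner ?w ?w = inner (A ?w) v" by (simp add: adjoint_clauses(1)[OF lin_blin])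
  also have "\<dots> \<le> norm (A ?w) * norm v" by (rule norm_cauchy_schwarz)
  also have "\<dots> \<le> norm A * norm ?w * norm v" by (simp add: mult_right_mono norm_blinfun)
  finally show "inner ?w ?w \<le> norm A * norm v * norm ?w" by (simp add: algebra_simps)
  show "norm A * norm v \<ge> 0" by simp
qed

lemma adj_diff_norm:
  fixes A B :: "'a::euclidean_space \<Rightarrow>\<^sub>L 'a"
  shows "norm (adjoint (blinfun_apply A) v - adjoint (blinfun_apply B) v) \<le> norm (A - B) * norm v"
proof (rule norm_le_from_sq)
  let ?w = "adjoint (blinfun_apply A) v - adjoint (blinfun_apply B) v"
  have "inner ?w ?w = inner (A ?w) v - inner (B ?w) v"
    by (simp add: inner_diff_right adjoint_clauses(1)[OF lin_blin])
  also have "\<dots> = inner ((A - B) ?w) v" by (simp add: blinfun.diff_left inner_diff_left)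
  also have "\<dots> \<le> norm ((A - B) ?w) * norm v" by (rule norm_cauchy_schwarz)
  also have "\<dots> \<le> norm (A - B) * norm ?w * norm v" by (simp add: mult_right_mono norm_blinfun)
  finally show "inner ?w ?w \<le> norm (A - B) * norm v * norm ?w" by (simp add: algebra_simps)
  show "norm (A - B) * norm v \<ge> 0" by simp
qed

lemma adj_lin:
  fixes A :: "'a::euclidean_space \<Rightarrow>\<^sub>L 'a"
  shows "adjoint (blinfun_apply A) (u + v) = adjoint (blinfun_apply A) u + adjoint (blinfun_apply A) v"
    and "adjoint (blinfun_apply A) (u - v) = adjoint (blinfun_apply A) u - adjoint (blinfun_apply A) v"
    and "adjoint (blinfun_apply A) (c *\<^sub>R u) = c *\<^sub>R adjoint (blinfun_apply A) u"
  using adjoint_linear[OF lin_blin[of A]]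
  by (simp_all add: linear_add linear_diff linear_scale)

lemma geo_Suc: "geo_quot M (Suc a) (Suc b) = M * geo_quot M a b"
  unfolding geo_quot_def sum.shift_bounds_Suc_ivl by (simp add: sum_distrib_left)

lemma geo_0_Suc: "geo_quot M 0 (Suc t) = 1 + M * geo_quot M 0 t"
proof -
  have "geo_quot M 0 (Suc t) = M ^ 0 + geo_quot M (Suc 0) (Suc t)"
    unfolding geo_quot_def by (simp add: sum.atLeast_Suc_lessThan)
  then show ?thesis by (simp add: geo_Suc)
qed

lemma geo_nonneg: "M \<ge> 0 \<Longrightarrow> geo_quot M a b \<ge> 0"
  unfolding geo_quot_def by (simp add: sum_nonneg)

lemma coef_rec:
  assumes "Suc i \<le> J" "J < n" and eta_nz: "eta (Suc J) \<noteq> 0"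
  shows "C_const n Mf Lf M Lp rho eta J i * a + Ct_const M rho eta J i * b
   = M * (C_const n Mf Lf M Lp rho eta J (Suc i) * a + Ct_const M rho eta J (Suc i) * b)
    + 2 * M * (M ^ (J - Suc i) * (a / eta (Suc J) + (if J > Suc i then rho J * a else 0)))
    + (if J = Suc i then rho J * M * (a + b) else 0)"
proof -
  have g: "geo_quot M (J - i) (n - i - 1) = M * geo_quot M (J - Suc i) (n - Suc i - 1)"
  proof -
    have "J - i = Suc (J - Suc i)" "n - i - 1 = Suc (n - Suc i - 1)" using assms by auto
    then show ?thesis by (simp add: geo_Suc)
  qed
  have p: "M ^ (J - i) = M * M ^ (J - Suc i)"
  proof -
    have "J - i = Suc (J - Suc i)" using assms by auto
    then show ?thesis by simp
  qed
  show ?thesis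
  proof (cases "J = Suc i")
    case True
    then show ?thesis using g p
      by (simp add: C_const_def Ct_const_def field_simps eta_nz)
  next
    case False
    then have "J > Suc i" using assms by auto
    then show ?thesis using g p
      by (simp add: C_const_def Ct_const_def field_simps eta_nz)
  qed
qed

lemma n3: fixes p q r :: "'a::real_normed_vector"
  shows "norm (- p - q + r) \<le> norm p + norm q + norm r"
  using norm_triangle_ineq[of "- p - q" r] norm_triangle_ineq4[of "- p" q] by simp

lemma n5: fixes a b c d e :: "'a::real_normed_vector"
  shows "norm (a + b + c - d + e) \<le> norm a + norm b + norm c + norm d + norm e"
  using norm_triangle_ineq[of "a+b+c-d" e] norm_triangle_ineq4[of "a+b+c" d]
    norm_triangle_ineq[of "a+b" c] norm_triangle_ineq[of a b] by linarith

theorem lemma2: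
  fixes n :: nat
    and f :: "nat \<Rightarrow> 'a::euclidean_space \<Rightarrow> real" and Df :: "nat \<Rightarrow> 'a \<Rightarrow> 'a"
    and phi :: "'a \<Rightarrow> 'a" and Dphi :: "'a \<Rightarrow> 'a \<Rightarrow>\<^sub>L 'a"
    and rho eta :: "nat \<Rightarrow> real"
    and x lam :: "nat \<Rightarrow> nat \<Rightarrow> 'a"
    and S :: "(nat \<Rightarrow> 'a) set"
    and Mf Lf Cphi Mphi Lphi :: real and k :: nat
  assumes n_pos: "n \<ge> 1"
    and f_C1: "\<And>i y. i \<le> n \<Longrightarrow> (f i has_derivative (\<lambda>h. inner (Df i y) h)) (at y)"
    and Df_cont: "\<And>i. i \<le> n \<Longrightarrow> continuous_on UNIV (Df i)"
    and phi_C1: "\<And>y. (phi has_derivative blinfun_apply (Dphi y)) (at y)"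
    and Dphi_cont: "continuous_on UNIV Dphi"
    and rho_pos: "\<And>i. i < n \<Longrightarrow> rho i > 0"
    and eta_pos: "\<And>i. i \<le> n \<Longrightarrow> eta i > 0"
    and admm: "prox_admm f phi rho eta n x lam"
    and S_compact: "compact S"
    and S_sub: "S \<subseteq> {..n} \<rightarrow>\<^sub>E UNIV"
    and A2: "assumption_A2 n Df phi Dphi S Mf Lf Cphi Mphi Lphi"
    and k_ge: "k \<ge> 1"
    and xk_S: "restrict (x k) {..n} \<in> S"
    and xk1_S: "restrict (x (Suc k)) {..n} \<in> S"
  shows "\<forall>i<n. (norm (lam (Suc k) i - lam k i))\<^sup>2 \<le>
      (\<Sum>j=i..<n. 2 * real (n - i) * (C_const n Mf Lf Mphi Lphi rho eta j i)\<^sup>2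
                   * (norm (x (Suc k) (Suc j) - x k (Suc j)))\<^sup>2)
    + (\<Sum>j=i..<n. 2 * real (n - i) * (Ct_const Mphi rho eta j i)\<^sup>2
                   * (norm (x k (Suc j) - x (k - 1) (Suc j)))\<^sup>2)"
proof -
  have A2': "\<forall>X\<in>S. \<forall>Y\<in>S. \<forall>i\<le>n.
        norm (Df i (X i)) \<le> Mf \<and>
        norm (Df i (X i) - Df i (Y i)) \<le> Lf * norm (X i - Y i) \<and>
        norm (phi (X i)) \<le> Cphi \<and>
        norm (Dphi (X i)) \<le> Mphi \<and>
        norm (Dphi (X i) - Dphi (Y i)) \<le> Lphi * norm (X i - Y i)"
    and pos: "Mf > 0" "Lf > 0" "Mphi > 0" "Lphi > 0"
    using A2 unfolding assumption_A2_def by auto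
  obtain km where k: "k = Suc km" using k_ge by (cases k) auto
  have bnd: "norm (Df j (x (Suc k) j)) \<le> Mf \<and>
     norm (Df j (x (Suc k) j) - Df j (x k j)) \<le> Lf * norm (x (Suc k) j - x k j) \<and>
     norm (Dphi (x (Suc k) j)) \<le> Mphi \<and>
     norm (Dphi (x (Suc k) j) - Dphi (x k j)) \<le> Lphi * norm (x (Suc k) j - x k j) \<and>
     norm (Dphi (x k j)) \<le> Mphi" if "j \<le> n" for j
    using A2'[rule_format, OF xk1_S xk_S that] A2'[rule_format, OF xk_S xk1_S that] that by simp
  define na where "na j = norm (x (Suc k) j - x k j)" for j
  define nb where "nb j = norm (x k j - x (k - 1) j)" for j
  have nan: "na j \<ge> 0" "nb j \<ge> 0" for j by (simp_all add: na_def nb_def)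
  define AD where "AD z = adjoint (blinfun_apply (Dphi z))" for z
  have etap: "eta (Suc j) > 0" if "j < n" for j using eta_pos that by simp
  have R1: "lam (Suc k) j = - Df (Suc j) (x (Suc k) (Suc j))
     - (1 / eta (Suc j)) *\<^sub>R (x (Suc k) (Suc j) - x k (Suc j))
     + (if Suc j < n then AD (x (Suc k) (Suc j))
          (lam (Suc k) (Suc j) - rho (Suc j) *\<^sub>R (x (Suc k) (Suc (Suc j)) - x k (Suc (Suc j)))) else 0)"
    if "j < n" for j
    unfolding AD_def using rel[OF admm f_C1 phi_C1 that, of k] etap[OF that] by simp
  have R0: "lam k j = - Df (Suc j) (x k (Suc j))
     - (1 / eta (Suc j)) *\<^sub>R (x k (Suc j) - x (k - 1) (Suc j))
     + (if Suc j < n then AD (x k (Suc j))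
          (lam k (Suc j) - rho (Suc j) *\<^sub>R (x k (Suc (Suc j)) - x (k - 1) (Suc (Suc j)))) else 0)"
    if "j < n" for j
    unfolding AD_def k using rel[OF admm f_C1 phi_C1 that, of km] etap[OF that] by simp
  define B where "B i = (\<Sum>J=i..<n. Mphi ^ (J - i) * (na (Suc J) / eta (Suc J)
      + (if J > i then rho J * na (Suc J) else 0)))" for i
  have Bnn: "B i \<ge> 0" for i
    unfolding B_def na_def using etap rho_pos pos
    by (intro sum_nonneg) (auto intro!: mult_nonneg_nonneg add_nonneg_nonneg divide_nonneg_pos simp: less_imp_le)
  have Brec: "B i = na (Suc i) / eta (Suc i) + Mphi * (rho (Suc i) * na (Suc (Suc i))) + Mphi * B (Suc i)"
    if "Suc i < n" for i
  proof -
    have "B i = Mphi ^ (i - i) * (na (Suc i) / eta (Suc i) + 0)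
       + (\<Sum>J=Suc i..<n. Mphi ^ (J - i) * (na (Suc J) / eta (Suc J)
        + (if J > i then rho J * na (Suc J) else 0)))"
      unfolding B_def using that by (simp add: sum.atLeast_Suc_lessThan)
    also have "(\<Sum>J=Suc i..<n. Mphi ^ (J - i) * (na (Suc J) / eta (Suc J)
        + (if J > i then rho J * na (Suc J) else 0)))
      = (\<Sum>J=Suc i..<n. Mphi * (Mphi ^ (J - Suc i) * (na (Suc J) / eta (Suc J)
        + (if J > Suc i then rho J * na (Suc J) else 0)))
        + (if J = Suc i then Mphi * (rho J * na (Suc J)) else 0))"
    proof (rule sum.cong)
      fix J assume "J \<in> {Suc i..<n}"
      then have J: "J - i = Suc (J - Suc i)" "J > i" by auto
      show "Mphi ^ (J - i) * (na (Suc J) / eta (Suc J)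
        + (if J > i then rho J * na (Suc J) else 0))
        = Mphi * (Mphi ^ (J - Suc i) * (na (Suc J) / eta (Suc J)
        + (if J > Suc i then rho J * na (Suc J) else 0)))
        + (if J = Suc i then Mphi * (rho J * na (Suc J)) else 0)"
        using J \<open>J \<in> {Suc i..<n}\<close> by (auto simp: algebra_simps)
    qed simp
    also have "\<dots> = Mphi * B (Suc i) + Mphi * (rho (Suc i) * na (Suc (Suc i)))"
      unfolding B_def using that by (simp add: sum.distrib sum_distrib_left)
    finally show ?thesis by simp
  qed
  have n1: "Suc (n - 1) = n" using n_pos by simp
  have iv: "{n - 1..<n} = {n - 1}" using n_pos by auto
  have Bbase: "B (n - 1) = na n / eta n"
    unfolding B_def iv using n1 by simp
  have St1: "\<exists>G R. lam (Suc k) i = G + R \<and> norm G \<le> Mf * geo_quot Mphi 0 (n - i) \<and> norm R \<le> B i"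
    if "i < n" for i
  proof -
    have "i \<le> n - 1" using that by simp
    then show ?thesis
    proof (induction i rule: inc_induct)
      case base
      have e: "lam (Suc k) (n-1) = - Df n (x (Suc k) n) + (- (1 / eta n) *\<^sub>R (x (Suc k) n - x k n))"
        using R1[of "n-1"] n_pos n1 by simp
      have g: "geo_quot Mphi 0 (n - (n - 1)) = 1" using n_pos by (simp add: geo_quot_def)
      have "norm (- (1 / eta n) *\<^sub>R (x (Suc k) n - x k n)) = na n / eta n"
        using eta_pos[of n] by (simp add: na_def)
      then show ?case using e g Bbase bnd[of n]
        by (intro exI[of _ "- Df n (x (Suc k) n)"] exI[of _ "- (1 / eta n) *\<^sub>R (x (Suc k) n - x k n)"]) simp
    next
      case (step t)
      then obtain G' R' where GR: "lam (Suc k) (Suc t) = G' + R'"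
        "norm G' \<le> Mf * geo_quot Mphi 0 (n - Suc t)" "norm R' \<le> B (Suc t)" by blast
      have t: "Suc t < n" using step by simp
      define X where "X = x (Suc k) (Suc t)"
      define G where "G = - Df (Suc t) X + AD X G'"
      define R where "R = - (1 / eta (Suc t)) *\<^sub>R (x (Suc k) (Suc t) - x k (Suc t))
         + AD X (R' - rho (Suc t) *\<^sub>R (x (Suc k) (Suc (Suc t)) - x k (Suc (Suc t))))"
      have e: "lam (Suc k) t = G + R"
        using R1[of t] t unfolding G_def R_def GR(1) AD_def X_def
        by (simp add: adj_lin algebra_simps)
      have nX: "norm (Dphi X) \<le> Mphi" using bnd[of "Suc t"] t unfolding X_def by simp
      have "norm G \<le> norm (Df (Suc t) X) + norm (AD X G')"
        unfolding G_def using norm_triangle_ineq[of "- Df (Suc t) X" "AD X G'"] by simp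
      also have "\<dots> \<le> Mf + Mphi * (Mf * geo_quot Mphi 0 (n - Suc t))"
      proof -
        have "norm (AD X G') \<le> norm (Dphi X) * norm G'" unfolding AD_def by (rule adj_norm)
        also have "\<dots> \<le> Mphi * (Mf * geo_quot Mphi 0 (n - Suc t))"
          using nX GR(2) pos by (intro mult_mono) auto
        finally show ?thesis using bnd[of "Suc t"] t unfolding X_def by simp
      qed
      also have "\<dots> = Mf * geo_quot Mphi 0 (n - t)"
      proof -
        have "n - t = Suc (n - Suc t)" using t by simp
        then show ?thesis by (simp add: geo_0_Suc algebra_simps)
      qed
      finally have nG: "norm G \<le> Mf * geo_quot Mphi 0 (n - t)" .
      have "norm R \<le> norm ((1 / eta (Suc t)) *\<^sub>R (x (Suc k) (Suc t) - x k (Suc t)))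
         + norm (AD X (R' - rho (Suc t) *\<^sub>R (x (Suc k) (Suc (Suc t)) - x k (Suc (Suc t)))))"
        unfolding R_def using norm_triangle_ineq[of "- (1 / eta (Suc t)) *\<^sub>R (x (Suc k) (Suc t) - x k (Suc t))"] by simp
      also have "\<dots> \<le> na (Suc t) / eta (Suc t) + Mphi * (B (Suc t) + rho (Suc t) * na (Suc (Suc t)))"
      proof -
        have a: "norm ((1 / eta (Suc t)) *\<^sub>R (x (Suc k) (Suc t) - x k (Suc t))) = na (Suc t) / eta (Suc t)"
          using etap[of t] t by (simp add: na_def)
        have "norm (AD X (R' - rho (Suc t) *\<^sub>R (x (Suc k) (Suc (Suc t)) - x k (Suc (Suc t)))))
           \<le> norm (Dphi X) * norm (R' - rho (Suc t) *\<^sub>R (x (Suc k) (Suc (Suc t)) - x k (Suc (Suc t))))"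
          unfolding AD_def by (rule adj_norm)
        also have "\<dots> \<le> Mphi * (B (Suc t) + rho (Suc t) * na (Suc (Suc t)))"
        proof (rule mult_mono)
          have "norm (R' - rho (Suc t) *\<^sub>R (x (Suc k) (Suc (Suc t)) - x k (Suc (Suc t))))
              \<le> norm R' + norm (rho (Suc t) *\<^sub>R (x (Suc k) (Suc (Suc t)) - x k (Suc (Suc t))))"
            by (rule norm_triangle_ineq4)
          also have "\<dots> = norm R' + rho (Suc t) * na (Suc (Suc t))"
            using rho_pos[of "Suc t"] t by (simp add: na_def)
          finally show "norm (R' - rho (Suc t) *\<^sub>R (x (Suc k) (Suc (Suc t)) - x k (Suc (Suc t))))
              \<le> B (Suc t) + rho (Suc t) * na (Suc (Suc t))" using GR(3) by linarith
        qed (use nX pos in auto)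
        finally show ?thesis using a by linarith
      qed
      also have "\<dots> = B t" using Brec[OF t] by (simp add: algebra_simps)
      finally show ?case using e nG by blast
    qed
  qed
  define SS where "SS i = (\<Sum>J=i..<n. C_const n Mf Lf Mphi Lphi rho eta J i * na (Suc J)
       + Ct_const Mphi rho eta J i * nb (Suc J))" for i
  have SSrec: "SS i = (geo_quot Mphi 0 (n - Suc i) * Mf * Lphi + Lf + 1 / eta (Suc i)) * na (Suc i)
      + nb (Suc i) / eta (Suc i) + Mphi * SS (Suc i) + 2 * Mphi * B (Suc i)
      + rho (Suc i) * Mphi * (na (Suc (Suc i)) + nb (Suc (Suc i)))" if "Suc i < n" for i
  proof -
    have "SS i = (C_const n Mf Lf Mphi Lphi rho eta i i * na (Suc i) + Ct_const Mphi rho eta i i * nb (Suc i))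
       + (\<Sum>J=Suc i..<n. C_const n Mf Lf Mphi Lphi rho eta J i * na (Suc J)
       + Ct_const Mphi rho eta J i * nb (Suc J))"
      unfolding SS_def using that by (simp add: sum.atLeast_Suc_lessThan)
    also have "(\<Sum>J=Suc i..<n. C_const n Mf Lf Mphi Lphi rho eta J i * na (Suc J)
       + Ct_const Mphi rho eta J i * nb (Suc J))
      = (\<Sum>J=Suc i..<n. Mphi * (C_const n Mf Lf Mphi Lphi rho eta J (Suc i) * na (Suc J)
          + Ct_const Mphi rho eta J (Suc i) * nb (Suc J))
        + 2 * Mphi * (Mphi ^ (J - Suc i) * (na (Suc J) / eta (Suc J) + (if J > Suc i then rho J * na (Suc J) else 0)))
        + (if J = Suc i then rho J * Mphi * (na (Suc J) + nb (Suc J)) else 0))"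
    proof (rule sum.cong)
      fix J assume J: "J \<in> {Suc i..<n}"
      then have "eta (Suc J) \<noteq> 0" using etap[of J] by auto
      then show "C_const n Mf Lf Mphi Lphi rho eta J i * na (Suc J) + Ct_const Mphi rho eta J i * nb (Suc J)
        = Mphi * (C_const n Mf Lf Mphi Lphi rho eta J (Suc i) * na (Suc J)
          + Ct_const Mphi rho eta J (Suc i) * nb (Suc J))
        + 2 * Mphi * (Mphi ^ (J - Suc i) * (na (Suc J) / eta (Suc J) + (if J > Suc i then rho J * na (Suc J) else 0)))
        + (if J = Suc i then rho J * Mphi * (na (Suc J) + nb (Suc J)) else 0)"
        using J by (intro coef_rec) auto
    qed simp
    also have "\<dots> = Mphi * SS (Suc i) + 2 * Mphi * B (Suc i)
        + rho (Suc i) * Mphi * (na (Suc (Suc i)) + nb (Suc (Suc i)))"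
      unfolding SS_def B_def using that by (simp add: sum.distrib sum_distrib_left distrib_left)
    finally show ?thesis by (simp add: C_const_def Ct_const_def)
  qed
  have SSbase: "SS (n - 1) = (Lf + 1 / eta n) * na n + nb n / eta n"
    unfolding SS_def iv using n1 by (simp add: C_const_def Ct_const_def geo_quot_def)
  have St2: "norm (lam (Suc k) i - lam k i) \<le> SS i" if "i < n" for i
  proof -
    have "i \<le> n - 1" using that by simp
    then show ?thesis
    proof (induction i rule: inc_induct)
      case base
      have e: "lam (Suc k) (n-1) - lam k (n-1) = - (Df n (x (Suc k) n) - Df n (x k n))
         - (1 / eta n) *\<^sub>R ((x (Suc k) n - x k n) - (x k n - x (k - 1) n)) + 0"
      proof -
        have r1: "lam (Suc k) (n-1) = - Df n (x (Suc k) n) - (1 / eta n) *\<^sub>R (x (Suc k) n - x k n)"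
          using R1[of "n-1"] n_pos n1 by simp
        have r0: "lam k (n-1) = - Df n (x k n) - (1 / eta n) *\<^sub>R (x k n - x (k - 1) n)"
          using R0[of "n-1"] n_pos n1 by simp
        show ?thesis unfolding r1 r0 by (simp add: algebra_simps)
      qed
      have "norm (lam (Suc k) (n-1) - lam k (n-1)) \<le> norm (Df n (x (Suc k) n) - Df n (x k n))
         + norm ((1 / eta n) *\<^sub>R ((x (Suc k) n - x k n) - (x k n - x (k - 1) n))) + norm (0::'a)"
        unfolding e by (rule n3)
      also have "norm ((1 / eta n) *\<^sub>R ((x (Suc k) n - x k n) - (x k n - x (k - 1) n)))
          \<le> (1 / eta n) * (na n + nb n)"
        using eta_pos[of n] norm_triangle_ineq4[of "x (Suc k) n - x k n" "x k n - x (k - 1) n"]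
        by (simp add: na_def nb_def divide_right_mono)
      finally show ?case unfolding SSbase using bnd[of n]
        by (simp add: na_def add_divide_distrib algebra_simps)
    next
      case (step t)
      have t: "Suc t < n" using step by simp
      obtain G R where GR: "lam (Suc k) (Suc t) = G + R"
        "norm G \<le> Mf * geo_quot Mphi 0 (n - Suc t)" "norm R \<le> B (Suc t)"
        using St1[OF t] by blast
      define X1 where "X1 = x (Suc k) (Suc t)"
      define X0 where "X0 = x k (Suc t)"
      define a2 where "a2 = x (Suc k) (Suc (Suc t)) - x k (Suc (Suc t))"
      define b2 where "b2 = x k (Suc (Suc t)) - x (k - 1) (Suc (Suc t))"
      define L0 where "L0 = lam k (Suc t)"
      define E where "E = (AD X1 G - AD X0 G) + (AD X1 R - AD X0 R) + AD X0 (G + R - L0)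
          - rho (Suc t) *\<^sub>R AD X1 a2 + rho (Suc t) *\<^sub>R AD X0 b2"
      have e: "lam (Suc k) t - lam k t = - (Df (Suc t) X1 - Df (Suc t) X0)
         - (1 / eta (Suc t)) *\<^sub>R ((x (Suc k) (Suc t) - x k (Suc t)) - (x k (Suc t) - x (k - 1) (Suc t))) + E"
      proof -
        have r1: "lam (Suc k) t = - Df (Suc t) X1 - (1 / eta (Suc t)) *\<^sub>R (x (Suc k) (Suc t) - X0)
            + AD X1 (G + R - rho (Suc t) *\<^sub>R a2)"
          using R1[of t] t GR(1) by (simp add: X1_def X0_def a2_def)
        have r0: "lam k t = - Df (Suc t) X0 - (1 / eta (Suc t)) *\<^sub>R (X0 - x (k - 1) (Suc t))
            + AD X0 (L0 - rho (Suc t) *\<^sub>R b2)"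
          using R0[of t] t by (simp add: X0_def b2_def L0_def)
        show ?thesis unfolding r1 r0 E_def AD_def adj_lin X0_def by (simp add: algebra_simps)
      qed
      have b1: "norm (Dphi X1) \<le> Mphi" "norm (Dphi X0) \<le> Mphi"
        "norm (Dphi X1 - Dphi X0) \<le> Lphi * na (Suc t)"
        "norm (Df (Suc t) X1 - Df (Suc t) X0) \<le> Lf * na (Suc t)"
        using bnd[of "Suc t"] t unfolding X1_def X0_def na_def by auto
      have D2: "norm (Dphi X1 - Dphi X0) \<le> 2 * Mphi"
        using norm_triangle_ineq4[of "Dphi X1" "Dphi X0"] b1 by linarith
      have geo0: "geo_quot Mphi 0 (n - Suc t) \<ge> 0" using pos by (simp add: geo_nonneg)
      have e1: "norm (AD X1 G - AD X0 G) \<le> (Lphi * na (Suc t)) * (Mf * geo_quot Mphi 0 (n - Suc t))"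
        unfolding AD_def
        by (rule order_trans[OF adj_diff_norm]) (intro mult_mono, use b1 GR(2) pos nan in auto)
      have e2: "norm (AD X1 R - AD X0 R) \<le> (2 * Mphi) * B (Suc t)"
        unfolding AD_def
        by (rule order_trans[OF adj_diff_norm]) (intro mult_mono, use D2 GR(3) pos in auto)
      have e3: "norm (AD X0 (G + R - L0)) \<le> Mphi * SS (Suc t)"
        unfolding AD_def
        by (rule order_trans[OF adj_norm]) (intro mult_mono, use b1 step.IH GR(1) pos in \<open>auto simp: L0_def\<close>)
      have e4: "norm (rho (Suc t) *\<^sub>R AD X1 a2) \<le> rho (Suc t) * (Mphi * na (Suc (Suc t)))"
      proof -
        have "norm (AD X1 a2) \<le> Mphi * na (Suc (Suc t))"
          unfolding AD_def by (rule order_trans[OF adj_norm]) (use b1 in \<open>auto intro!: mult_right_mono simp: a2_def na_def\<close>)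
        then show ?thesis using rho_pos[of "Suc t"] t by (simp add: mult_left_mono)
      qed
      have e5: "norm (rho (Suc t) *\<^sub>R AD X0 b2) \<le> rho (Suc t) * (Mphi * nb (Suc (Suc t)))"
      proof -
        have "norm (AD X0 b2) \<le> Mphi * nb (Suc (Suc t))"
          unfolding AD_def by (rule order_trans[OF adj_norm]) (use b1 in \<open>auto intro!: mult_right_mono simp: b2_def nb_def\<close>)
        then show ?thesis using rho_pos[of "Suc t"] t by (simp add: mult_left_mono)
      qed
      have nE: "norm E \<le> norm (AD X1 G - AD X0 G) + norm (AD X1 R - AD X0 R) + norm (AD X0 (G + R - L0))
          + norm (rho (Suc t) *\<^sub>R AD X1 a2) + norm (rho (Suc t) *\<^sub>R AD X0 b2)"
        unfolding E_def by (rule n5)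
      have sc: "norm ((1 / eta (Suc t)) *\<^sub>R ((x (Suc k) (Suc t) - x k (Suc t)) - (x k (Suc t) - x (k - 1) (Suc t))))
          \<le> (1 / eta (Suc t)) * (na (Suc t) + nb (Suc t))"
        using etap[of t] t norm_triangle_ineq4[of "x (Suc k) (Suc t) - x k (Suc t)" "x k (Suc t) - x (k - 1) (Suc t)"]
        by (simp add: na_def nb_def divide_right_mono)
      have "norm (lam (Suc k) t - lam k t) \<le> norm (Df (Suc t) X1 - Df (Suc t) X0)
         + norm ((1 / eta (Suc t)) *\<^sub>R ((x (Suc k) (Suc t) - x k (Suc t)) - (x k (Suc t) - x (k - 1) (Suc t))))
         + norm E"
        unfolding e by (rule n3)
      also have "\<dots> \<le> SS t"
        unfolding SSrec[OF t] using e1 e2 e3 e4 e5 nE sc b1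
        by (simp add: add_divide_distrib algebra_simps)
      finally show ?case .
    qed
  qed
  show ?thesis
  proof (intro allI impI)
    fix i assume i: "i < n"
    define u where "u J = C_const n Mf Lf Mphi Lphi rho eta J i * na (Suc J)" for J
    define v where "v J = Ct_const Mphi rho eta J i * nb (Suc J)" for J
    have "(norm (lam (Suc k) i - lam k i))\<^sup>2 \<le> (SS i)\<^sup>2"
      using St2[OF i] by (simp add: power_mono)
    also have "(SS i)\<^sup>2 \<le> (\<Sum>J=i..<n. (u J + v J)\<^sup>2) * card {i..<n}"
      unfolding SS_def u_def v_def by (rule sum_squared_le_sum_of_squares)
    also have "\<dots> \<le> (\<Sum>J=i..<n. 2 * ((u J)\<^sup>2 + (v J)\<^sup>2)) * card {i..<n}"
    proof (rule mult_right_mono)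
      show "(\<Sum>J=i..<n. (u J + v J)\<^sup>2) \<le> (\<Sum>J=i..<n. 2 * ((u J)\<^sup>2 + (v J)\<^sup>2))"
      proof (rule sum_mono)
        fix J
        have "0 \<le> (u J - v J)\<^sup>2" by simp
        then show "(u J + v J)\<^sup>2 \<le> 2 * ((u J)\<^sup>2 + (v J)\<^sup>2)"
          by (simp add: power2_eq_square algebra_simps)
      qed
    qed simp
    also have "\<dots> = (\<Sum>j=i..<n. 2 * real (n - i) * (C_const n Mf Lf Mphi Lphi rho eta j i)\<^sup>2
                   * (norm (x (Suc k) (Suc j) - x k (Suc j)))\<^sup>2)
    + (\<Sum>j=i..<n. 2 * real (n - i) * (Ct_const Mphi rho eta j i)\<^sup>2
                   * (norm (x k (Suc j) - x (k - 1) (Suc j)))\<^sup>2)"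
    proof -
      define cc where "cc = real (n - i)"
      have cd: "real (card {i..<n}) = cc" unfolding cc_def by simp
      have "(\<Sum>J=i..<n. 2 * ((u J)\<^sup>2 + (v J)\<^sup>2)) * card {i..<n}
        = (\<Sum>j=i..<n. 2 * cc * (C_const n Mf Lf Mphi Lphi rho eta j i)\<^sup>2
                   * (norm (x (Suc k) (Suc j) - x k (Suc j)))\<^sup>2
           + 2 * cc * (Ct_const Mphi rho eta j i)\<^sup>2
                   * (norm (x k (Suc j) - x (k - 1) (Suc j)))\<^sup>2)"
        unfolding sum_distrib_right cd
        by (rule sum.cong) (simp_all add: u_def v_def na_def nb_def power_mult_distrib algebra_simps)
      then show ?thesis unfolding cc_def by (simp add: sum.distrib)
    qed
    finally show "(norm (lam (Suc k) i - lam k i))\<^sup>2 \<le> (\<Sum>j=i..<n. 2 * real (n - i) * (C_const n Mf Lf Mphi Lphi rho eta j i)\<^sup>2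
                   * (norm (x (Suc k) (Suc j) - x k (Suc j)))\<^sup>2)
    + (\<Sum>j=i..<n. 2 * real (n - i) * (Ct_const Mphi rho eta j i)\<^sup>2
                   * (norm (x k (Suc j) - x (k - 1) (Suc j)))\<^sup>2)" .
  qed
qed

end
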